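(* Let $I=(\mathcal{M},[N],(d_i)_{i\in[N]})$ be a non-positive instance with $\mathcal{M}\ne\emptyset$, and let $(S_1,\ldots,S_N)$ be the allocation produced by the round-robin protocol in which agents pick in the order $1,2,\dots,N,1,2,\dots,N,\dots$ and at her turn agent $i$ receives an unallocated item $j$ maximizing $d_i(j)$ (i.e. of least disutility; ties broken arbitrarily), until all items are allocated. Then for all $i\in[N]$, $$d_i(S_i)\ge\Big(2-\frac1N\Big)\cdot MmS_{d_i}^N(\mathcal{M}),$$ and the constant $2-\frac1N$ cannot be improved in general: for every $N\ge 1$ there is a non-positive instance with $N$ agents where equality holds for some agent with $MmS_{d_i}^N(\mathcal{M})<0$.
   Context: A non-positive instance: finite item set $\mathcal{M}$, agents $[N]=\{1,\dots,N\}$, additive utilities $d_i$ with $d_i(j)\le0$ for all items (chores). $\Pi_N(\mathcal{M})$ is the set of ordered $N$-partitions of $\mathcal{M}$ (parts may be empty); $MmS_{d}^N(\mathcal{M}):=\max_{(T_1,\ldots,T_N)\in\Pi_N(\mathcal{M})}\min_{j} d(T_j)$. *)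

theory Defs
  imports Complex_Main
begin

text \<open>Agents are 1..N. An ordered N-partition of M is a map T from agents to bundles,
  pairwise disjoint on 1..N and covering M (bundles may be empty).\<close>
definition is_partition :: "nat \<Rightarrow> 'a set \<Rightarrow> (nat \<Rightarrow> 'a set) \<Rightarrow> bool" where
  "is_partition N M T \<longleftrightarrow>
     (\<Union>j\<in>{1..N}. T j) = M \<and>
     (\<forall>j\<in>{1..N}. \<forall>k\<in>{1..N}. j \<noteq> k \<longrightarrow> T j \<inter> T k = {})"

definition MmS :: "('a \<Rightarrow> real) \<Rightarrow> nat \<Rightarrow> 'a set \<Rightarrow> real" where
  "MmS d N M = Max {Min ((\<lambda>j. sum d (T j)) ` {1..N}) | T. is_partition N M T}"

text \<open>A (complete) execution of the round-robin protocol: ps lists the items in the order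
  they are picked; the item picked at step t (0-based) goes to agent (t mod N) + 1, and it is
  an item maximizing that agent's utility among the items still unallocated (ties arbitrary).\<close>
definition rr_execution :: "nat \<Rightarrow> (nat \<Rightarrow> 'a \<Rightarrow> real) \<Rightarrow> 'a set \<Rightarrow> 'a list \<Rightarrow> bool" where
  "rr_execution N d M ps \<longleftrightarrow>
     distinct ps \<and> set ps = M \<and>
     (\<forall>t<length ps. \<forall>j\<in>M - set (take t ps). d (t mod N + 1) j \<le> d (t mod N + 1) (ps ! t))"

definition rr_bundle :: "nat \<Rightarrow> 'a list \<Rightarrow> nat \<Rightarrow> 'a set" where
  "rr_bundle N ps i = {ps ! t | t. t < length ps \<and> t mod N + 1 = i}"

end

theory Submission
  imports Defs "HOL-Library.FuncSet"
begin



abbreviation pval :: "('a \<Rightarrow> real) \<Rightarrow> nat \<Rightarrow> (nat \<Rightarrow> 'a set) \<Rightarrow> real" where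
  "pval d N T \<equiv> Min ((\<lambda>j. sum d (T j)) ` {1..N})"

lemma part_sub: "is_partition N M T \<Longrightarrow> j \<in> {1..N} \<Longrightarrow> T j \<subseteq> M"
  unfolding is_partition_def by blast

lemma V_fin:
  assumes "finite M"
  shows "finite {pval d N T | T. is_partition N M T}"
proof -
  have "{pval d N T | T. is_partition N M T} \<subseteq> (\<lambda>T. pval d N T) ` ({1..N} \<rightarrow>\<^sub>E Pow M)"
  proof
    fix v assume "v \<in> {pval d N T | T. is_partition N M T}"
    then obtain T where T: "is_partition N M T" "v = pval d N T" by blast
    have "restrict T {1..N} \<in> {1..N} \<rightarrow>\<^sub>E Pow M" using part_sub[OF T(1)] by auto
    moreover have "pval d N (restrict T {1..N}) = v"
    proof -
      have "(\<lambda>j. sum d (restrict T {1..N} j)) ` {1..N} = (\<lambda>j. sum d (T j)) ` {1..N}"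
        by (intro image_cong) auto
      then show ?thesis using T(2) by simp
    qed
    ultimately show "v \<in> (\<lambda>T. pval d N T) ` ({1..N} \<rightarrow>\<^sub>E Pow M)" by blast
  qed
  moreover have "finite ({1..N} \<rightarrow>\<^sub>E Pow M)" using assms by (simp add: finite_PiE)
  ultimately show ?thesis by (meson finite_imageI finite_subset)
qed

lemma triv_part: "N \<ge> 1 \<Longrightarrow> is_partition N M (\<lambda>j. if j = 1 then M else {})"
  unfolding is_partition_def by (auto intro!: bexI[of _ 1])

lemma MmS_in:
  assumes "finite M" "N \<ge> 1"
  shows "\<exists>T. is_partition N M T \<and> MmS d N M = pval d N T"
proof -
  have ne: "{pval d N T | T. is_partition N M T} \<noteq> {}" using triv_part[OF assms(2)] by blast
  show ?thesis using Max_in[OF V_fin[OF assms(1)] ne] unfolding MmS_def by blast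
qed

lemma MmS_ge:
  assumes "finite M" "is_partition N M T"
  shows "pval d N T \<le> MmS d N M"
  unfolding MmS_def using V_fin[OF assms(1)] assms(2) by (intro Max_ge) auto

lemma part_avg:
  assumes "finite M" "is_partition N M T" "N \<ge> 1"
  shows "real N * pval d N T \<le> sum d M"
proof -
  have fin: "\<forall>j\<in>{1..N}. finite (T j)" using part_sub[OF assms(2)] assms(1) finite_subset by blast
  have "sum d M = sum d (\<Union>j\<in>{1..N}. T j)" using assms(2) unfolding is_partition_def by simp
  also have "\<dots> = (\<Sum>j\<in>{1..N}. sum d (T j))"
    using assms(2) fin unfolding is_partition_def by (intro sum.UNION_disjoint) auto
  finally have e: "sum d M = (\<Sum>j\<in>{1..N}. sum d (T j))" .
  have "real (card {1..N}) * pval d N T \<le> (\<Sum>j\<in>{1..N}. sum d (T j))"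
    by (intro sum_bounded_below) auto
  then show ?thesis using e by simp
qed

lemma part_item:
  assumes "finite M" "is_partition N M T" "\<forall>j\<in>M. d j \<le> 0" "x \<in> M"
  shows "pval d N T \<le> d x"
proof -
  obtain k where k: "k \<in> {1..N}" "x \<in> T k" using assms(2,4) unfolding is_partition_def by blast
  have sub: "T k \<subseteq> M" using part_sub[OF assms(2) k(1)] .
  have fin: "finite (T k)" using sub assms(1) finite_subset by blast
  have "pval d N T \<le> sum d (T k)" using k(1) by (intro Min_le) auto
  also have "\<dots> = d x + sum d (T k - {x})" using fin k(2) by (simp add: sum.remove)
  also have "\<dots> \<le> d x" using sub assms(3) by (smt (verit) Diff_subset subset_iff sum_nonpos)
  finally show ?thesis .
qed

lemma MmS_avg:
  assumes "finite M" "N \<ge> 1"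
  shows "real N * MmS d N M \<le> sum d M"
  using MmS_in[OF assms, of d] part_avg[OF assms(1) _ assms(2)] by metis

lemma MmS_item:
  assumes "finite M" "N \<ge> 1" "\<forall>j\<in>M. d j \<le> 0" "x \<in> M"
  shows "MmS d N M \<le> d x"
  using MmS_in[OF assms(1,2), of d] part_item[OF assms(1) _ assms(3,4)] by metis


lemma block_sum:
  fixes F :: "nat \<Rightarrow> real"
  shows "(\<Sum>s\<in>{a..<a+q*N}. F s) = (\<Sum>k<q. \<Sum>j<N. F (a+k*N+j))"
proof (induction q)
  case 0 then show ?case by simp
next
  case (Suc q)
  have "(\<Sum>s\<in>{a..<a+Suc q*N}. F s) = (\<Sum>s\<in>{a..<a+q*N}. F s) + (\<Sum>s\<in>{a+q*N..<a+q*N+N}. F s)"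
    using sum.atLeastLessThan_concat[of a "a+q*N" "a+q*N+N" F] by (simp add: add.assoc add.commute[of N])
  also have "(\<Sum>s\<in>{a+q*N..<a+q*N+N}. F s) = (\<Sum>j<N. F (a+q*N+j))"
    using sum.shift_bounds_nat_ivl[of F 0 "a+q*N" N] by (simp add: add.commute atLeast0LessThan)
  finally show ?case using Suc by simp
qed

lemma rr_bound:
  assumes N: "N \<ge> 1" and fin: "finite M" and ne: "M \<noteq> {}"
    and nonpos: "\<forall>i\<in>{1..N}. \<forall>j\<in>M. d i j \<le> 0" and rr: "rr_execution N d M ps"
    and i: "i \<in> {1..N}"
  shows "sum (d i) (rr_bundle N ps i) \<ge> (2 - 1/real N) * MmS (d i) N M"
proof -
  define m where "m = length ps"
  define f where "f s = d i (ps ! s)" for s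
  define a where "a = i - 1"
  define \<mu> where "\<mu> = MmS (d i) N M"
  have dist: "distinct ps" and setps: "set ps = M"
    and greedy: "\<And>t j. t < m \<Longrightarrow> j \<in> M - set (take t ps) \<Longrightarrow> d (t mod N + 1) j \<le> d (t mod N + 1) (ps ! t)"
    using rr unfolding rr_execution_def m_def by auto
  have aN: "a < N" using i N unfolding a_def by auto
  have im: "t mod N + 1 = i \<longleftrightarrow> (\<exists>k. t = a + k*N)" for t
  proof
    assume "t mod N + 1 = i"
    then have "t mod N = a" unfolding a_def by auto
    then have "t = a + (t div N) * N" by (metis add.commute div_mult_mod_eq)
    then show "\<exists>k. t = a + k*N" by blast
  next
    assume "\<exists>k. t = a + k*N"
    then obtain k where "t = a + k*N" by blast
    then have "t mod N = a" using aN by simp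
    then show "t mod N + 1 = i" using i unfolding a_def by auto
  qed
  have fnp: "f s \<le> 0" if "s < m" for s
    using nonpos i setps that unfolding f_def m_def by auto
  have mono: "f s \<le> f (a+k*N)" if "a+k*N \<le> s" "s < m" for s k
  proof -
    let ?t = "a+k*N"
    have tm: "?t mod N + 1 = i" using im by blast
    have "ps ! s \<in> M" using that setps unfolding m_def by auto
    moreover have "ps ! s \<notin> set (take ?t ps)"
    proof
      assume "ps ! s \<in> set (take ?t ps)"
      then obtain u where u: "u < length (take ?t ps)" "take ?t ps ! u = ps ! s"
        by (auto simp: in_set_conv_nth)
      then have "u < ?t" "ps ! u = ps ! s" by auto
      moreover have "u < m" using \<open>u < ?t\<close> that by auto
      ultimately show False using dist that nth_eq_iff_index_eq unfolding m_def by fastforce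
    qed
    ultimately have "d (?t mod N + 1) (ps ! s) \<le> d (?t mod N + 1) (ps ! ?t)"
      using greedy[of ?t "ps ! s"] that by auto
    then show ?thesis unfolding f_def using tm by simp
  qed
  have setnth: "set ps = (\<lambda>s. ps ! s) ` {..<m}" unfolding m_def
    by (auto simp: in_set_conv_nth)
  have total: "sum (d i) M = (\<Sum>s<m. f s)"
  proof -
    have "sum (d i) M = sum (d i) ((\<lambda>s. ps ! s) ` {..<m})" using setps setnth by simp
    also have "\<dots> = (\<Sum>s<m. f s)"
      by (subst sum.reindex) (auto simp: f_def m_def intro!: inj_on_nth dist)
    finally show ?thesis .
  qed
  define r where "r = (LEAST k. m \<le> a + k*N)"
  have rex: "m \<le> a + m*N" using N by (simp add: trans_le_add2)
  have Kr: "a + k*N < m \<longleftrightarrow> k < r" for k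
  proof
    assume "a + k*N < m"
    show "k < r"
    proof (rule ccontr)
      assume "\<not> k < r"
      then have "r*N \<le> k*N" by simp
      moreover have "m \<le> a + r*N" unfolding r_def by (rule LeastI[of "\<lambda>k. m \<le> a + k*N", OF rex])
      ultimately show False using \<open>a + k*N < m\<close> by linarith
    qed
  next
    assume "k < r"
    then show "a + k*N < m" unfolding r_def using not_less_Least by force
  qed
  have bund: "rr_bundle N ps i = (\<lambda>k. ps ! (a+k*N)) ` {..<r}"
    unfolding rr_bundle_def using im Kr unfolding m_def by auto
  have inj: "inj_on (\<lambda>k. ps ! (a+k*N)) {..<r}"
  proof
    fix k l assume "k \<in> {..<r}" "l \<in> {..<r}" "ps ! (a+k*N) = ps ! (a+l*N)"
    moreover have "a+k*N < length ps" "a+l*N < length ps" using \<open>k \<in> {..<r}\<close> \<open>l \<in> {..<r}\<close> Kr unfolding m_def by auto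
    ultimately have "a+k*N = a+l*N" using dist nth_eq_iff_index_eq by blast
    then show "k = l" using N by simp
  qed
  have S: "sum (d i) (rr_bundle N ps i) = (\<Sum>k<r. f (a+k*N))"
    unfolding bund by (subst sum.reindex[OF inj]) (simp add: f_def)
  obtain x where x: "x \<in> M" using ne by blast
  have mu0: "\<mu> \<le> 0" using MmS_item[OF fin N, of "d i" x] nonpos i x unfolding \<mu>_def by fastforce
  have c0: "0 \<le> 2 - 1 / real N" using N by (simp add: field_simps)
  show ?thesis
  proof (cases r)
    case 0
    then show ?thesis using S mu0 c0 unfolding \<mu>_def by (simp add: mult_nonneg_nonpos)
  next
    case (Suc q)
    define L where "L = a + q*N"
    have Lm: "L < m" using Kr Suc unfolding L_def by simp
    define Q where "Q = (\<Sum>k<q. f (a+k*N))"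
    have SQ: "sum (d i) (rr_bundle N ps i) = Q + f L" unfolding S Suc Q_def L_def by simp
    have sub: "{a..<Suc L} \<subseteq> {..<m}" using Lm by auto
    have h1: "(\<Sum>s<m. f s) \<le> (\<Sum>s\<in>{a..<L}. f s) + f L"
    proof -
      have "(\<Sum>s<m. f s) = (\<Sum>s\<in>{..<m} - {a..<Suc L}. f s) + (\<Sum>s\<in>{a..<Suc L}. f s)"
        using sum.subset_diff[OF sub, of f] by (simp del: sum.op_ivl_Suc)
      also have "(\<Sum>s\<in>{..<m} - {a..<Suc L}. f s) \<le> 0" using fnp by (intro sum_nonpos) auto
      also have "(\<Sum>s\<in>{a..<Suc L}. f s) = (\<Sum>s\<in>{a..<L}. f s) + f L"
        unfolding L_def by simp
      finally show ?thesis by simp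
    qed
    have h2: "(\<Sum>s\<in>{a..<L}. f s) \<le> real N * Q"
    proof -
      have "(\<Sum>s\<in>{a..<L}. f s) = (\<Sum>k<q. \<Sum>j<N. f (a+k*N+j))"
        unfolding L_def by (rule block_sum)
      also have "\<dots> \<le> (\<Sum>k<q. real N * f (a+k*N))"
      proof (intro sum_mono)
        fix k assume k: "k \<in> {..<q}"
        have "(\<Sum>j<N. f (a+k*N+j)) \<le> real (card {..<N}) * f (a+k*N)"
        proof (intro sum_bounded_above)
          fix j assume j: "j \<in> {..<N}"
          have "a+k*N+j < a + Suc k * N" using j by simp
          also have "\<dots> \<le> L" using k unfolding L_def
            by (metis Suc_leI add_le_cancel_left lessThan_iff mult_le_mono1)
          finally show "f (a+k*N+j) \<le> f (a+k*N)" using Lm by (intro mono) auto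
        qed
        then show "(\<Sum>j<N. f (a+k*N+j)) \<le> real N * f (a+k*N)" by simp
      qed
      also have "\<dots> = real N * Q" unfolding Q_def by (simp add: sum_distrib_left)
      finally show ?thesis .
    qed
    have h3: "real N * \<mu> \<le> (\<Sum>s<m. f s)" using MmS_avg[OF fin N, of "d i"] total unfolding \<mu>_def by simp
    have h4: "\<mu> \<le> f L" using MmS_item[OF fin N, of "d i" "ps ! L"] nonpos i setps Lm
      unfolding \<mu>_def f_def m_def by auto
    have h5: "(real N - 1) * \<mu> \<le> (real N - 1) * f L" using h4 N by (intro mult_left_mono) auto
    have key: "(2 * real N - 1) * \<mu> \<le> real N * (Q + f L)"
      using h1 h2 h3 h5 by (simp add: algebra_simps)
    have "(2 - 1/real N) * \<mu> = (2 * real N - 1) * \<mu> / real N" using N by (simp add: field_simps)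
    also have "\<dots> \<le> Q + f L" using key N by (simp add: divide_le_eq mult.commute)
    finally show ?thesis using SQ unfolding \<mu>_def by simp
  qed
qed


lemma div_iff: "0 < (N::nat) \<Longrightarrow> x div N = q \<longleftrightarrow> q*N \<le> x \<and> x < q*N + N"
proof
  assume N: "0 < N" and q: "x div N = q"
  have e: "x = q * N + x mod N" using q by (metis div_mult_mod_eq)
  have "x mod N < N" using N by simp
  with e show "q*N \<le> x \<and> x < q*N + N" by linarith
next
  assume "0 < N" "q*N \<le> x \<and> x < q*N + N"
  then show "x div N = q" by (intro div_nat_eqI) (auto simp: mult.commute)
qed

lemma example:
  assumes N1: "N \<ge> (1::nat)"
  shows "\<exists>(M::nat set) (d::nat \<Rightarrow> nat \<Rightarrow> real) ps i.
               finite M \<and> M \<noteq> {} \<and> (\<forall>i\<in>{1..N}. \<forall>j\<in>M. d i j \<le> 0) \<and>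
               rr_execution N d M ps \<and> i \<in> {1..N} \<and> MmS (d i) N M < 0 \<and>
               sum (d i) (rr_bundle N ps i) = (2 - 1 / real N) * MmS (d i) N M"
proof -
  obtain p where Np: "N = Suc p" using N1 by (cases N) auto
  define n where "n = N * p"
  define M where "M = {0..n}"
  define d :: "nat \<Rightarrow> nat \<Rightarrow> real" where "d = (\<lambda>i j. if j = n then - real N else -1)"
  define ps where "ps = [0..<Suc n]"
  have N0: "0 < N" using Np by simp
  have fin: "finite M" and ne: "M \<noteq> {}" unfolding M_def by auto
  have np: "\<forall>i\<in>{1..N}. \<forall>j\<in>M. d i j \<le> 0" unfolding d_def by auto
  have rr: "rr_execution N d M ps"
    unfolding rr_execution_def
  proof (intro conjI allI impI ballI)
    show "distinct ps" unfolding ps_def by simp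
    show "set ps = M" unfolding ps_def M_def by auto
    fix t j assume t: "t < length ps" and j: "j \<in> M - set (take t ps)"
    have tn: "t \<le> n" using t unfolding ps_def by simp
    have "take t ps = [0..<t]" using t unfolding ps_def by simp
    then have jt: "t \<le> j" "j \<le> n" using j unfolding M_def by auto
    have pt: "ps ! t = t" using t unfolding ps_def by (simp del: upt_Suc add: nth_upt)
    show "d (t mod N + 1) j \<le> d (t mod N + 1) (ps ! t)"
    proof (cases "t = n")
      case True then have "j = n" using jt by simp
      then show ?thesis using True pt by simp
    next
      case False then show ?thesis using pt N1 unfolding d_def by auto
    qed
  qed
  define T where "T = (\<lambda>k. if k < N then {(k-1)*N..<(k-1)*N+N} else {n})"
  have memT: "x \<in> T k \<longleftrightarrow> (k < N \<and> x div N = k - 1) \<or> (k \<ge> N \<and> x = n)" for x k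
    unfolding T_def using div_iff[OF N0] by auto
  have smallT: "x < n" if "k < N" "x \<in> T k" "1 \<le> k" for x k
  proof -
    have "x < (k-1)*N + N" using that unfolding T_def by auto
    also have "\<dots> = k * N" using that N0 by (cases k) auto
    also have "\<dots> \<le> p * N" using that Np by (intro mult_le_mono1) simp
    also have "\<dots> = n" unfolding n_def by (simp add: mult.commute)
    finally show ?thesis .
  qed
  have part: "is_partition N M T"
    unfolding is_partition_def
  proof (intro conjI ballI impI)
    show "(\<Union>j\<in>{1..N}. T j) = M"
    proof
      show "(\<Union>j\<in>{1..N}. T j) \<subseteq> M"
        using smallT memT unfolding M_def by (force simp: not_less)
      show "M \<subseteq> (\<Union>j\<in>{1..N}. T j)"
      proof
        fix x assume "x \<in> M"
        then have x: "x \<le> n" unfolding M_def by simp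
        show "x \<in> (\<Union>j\<in>{1..N}. T j)"
        proof (cases "x = n")
          case True then show ?thesis using memT N1 by (intro UN_I[of N]) auto
        next
          case False
          then have "x < n" using x by simp
          then have "x div N < p" unfolding n_def using N0
            by (simp add: div_less_iff_less_mult mult.commute)
          then show ?thesis using memT Np by (intro UN_I[of "x div N + 1"]) auto
        qed
      qed
    qed
    fix j k assume jk: "j \<in> {1..N}" "k \<in> {1..N}" "j \<noteq> k"
    show "T j \<inter> T k = {}"
    proof (rule ccontr)
      assume "T j \<inter> T k \<noteq> {}"
      then obtain x where x: "x \<in> T j" "x \<in> T k" by blast
      show False
      proof (cases "j < N \<and> k < N")
        case True
        then have "x div N = j - 1" "x div N = k - 1" using x memT by auto
        then show False using jk by auto
      next
        case False
        then have "j = N \<or> k = N" using jk by auto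
        then show False
        proof
          assume "j = N"
          then have "x = n" "k < N" using x(1) memT jk by auto
          then show False using smallT[of k x] x(2) jk by auto
        next
          assume "k = N"
          then have "x = n" "j < N" using x(2) memT jk by auto
          then show False using smallT[of j x] x(1) jk by auto
        qed
      qed
    qed
  qed
  have valT: "sum (d 1) (T k) = - real N" if "k \<in> {1..N}" for k
  proof (cases "k < N")
    case True
    have "sum (d 1) (T k) = sum (\<lambda>_. -1) (T k)"
      using smallT[OF True] that unfolding d_def by (intro sum.cong) auto
    also have "\<dots> = - real N" using True unfolding T_def by simp
    finally show ?thesis .
  next
    case False then show ?thesis unfolding T_def d_def by simp
  qed
  have pvalT: "pval (d 1) N T = - real N"
  proof -
    have "(\<lambda>j. sum (d 1) (T j)) ` {1..N} = {- real N}" using valT N1 by auto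
    then show ?thesis by simp
  qed
  have lo: "- real N \<le> MmS (d 1) N M" using MmS_ge[OF fin part, of "d 1"] pvalT by simp
  have sumM: "sum (d 1) M = - real N * real N"
  proof -
    have "M = insert n {0..<n}" unfolding M_def by auto
    then have "sum (d 1) M = d 1 n + sum (d 1) {0..<n}" by simp
    also have "sum (d 1) {0..<n} = sum (\<lambda>_. -1) {0..<n}" unfolding d_def by (intro sum.cong) auto
    finally have "sum (d 1) M = - real N - real n" unfolding d_def by simp
    then show ?thesis unfolding n_def Np by (simp add: algebra_simps)
  qed
  have up: "MmS (d 1) N M \<le> - real N"
  proof -
    have "real N * MmS (d 1) N M \<le> real N * (- real N)" using MmS_avg[OF fin N1, of "d 1"] sumM by simp
    then show ?thesis by (rule mult_left_le_imp_le) (use N0 in simp)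
  qed
  have mu: "MmS (d 1) N M = - real N" using lo up by simp
  have bund: "rr_bundle N ps 1 = (\<lambda>k. k*N) ` {..<N}"
  proof -
    have "rr_bundle N ps 1 = {t. t \<le> n \<and> t mod N = 0}"
    proof -
      have len: "length ps = Suc n" unfolding ps_def by simp
      have pst: "ps ! t = t" if "t < Suc n" for t
        using that unfolding ps_def by (simp del: upt_Suc add: nth_upt)
      show ?thesis
      proof
        show "rr_bundle N ps 1 \<subseteq> {t. t \<le> n \<and> t mod N = 0}"
          unfolding rr_bundle_def len using pst by (auto simp: less_Suc_eq_le)
        show "{t. t \<le> n \<and> t mod N = 0} \<subseteq> rr_bundle N ps 1"
        proof
          fix x assume "x \<in> {t. t \<le> n \<and> t mod N = 0}"
          then have "x < length ps \<and> x mod N + 1 = 1" "ps ! x = x" using len pst by auto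
          then show "x \<in> rr_bundle N ps 1" unfolding rr_bundle_def by force
        qed
      qed
    qed
    also have "\<dots> = (\<lambda>k. k*N) ` {..<N}"
    proof
      show "{t. t \<le> n \<and> t mod N = 0} \<subseteq> (\<lambda>k. k*N) ` {..<N}"
      proof
        fix t assume "t \<in> {t. t \<le> n \<and> t mod N = 0}"
        then have t: "t \<le> n" "t mod N = 0" by auto
        have "t div N \<le> n div N" using t(1) by (rule div_le_mono)
        also have "n div N = p" unfolding n_def using N0 by simp
        finally have "t div N < N" using Np by simp
        moreover have "t = t div N * N" using t(2) using div_mult_mod_eq[of t N] by simp
        ultimately show "t \<in> (\<lambda>k. k*N) ` {..<N}" by blast
      qed
      show "(\<lambda>k. k*N) ` {..<N} \<subseteq> {t. t \<le> n \<and> t mod N = 0}"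
      proof
        fix t assume "t \<in> (\<lambda>k. k*N) ` {..<N}"
        then obtain k where k: "k < N" "t = k*N" by blast
        have "k*N \<le> p*N" using k Np by (intro mult_le_mono1) simp
        then show "t \<in> {t. t \<le> n \<and> t mod N = 0}" using k unfolding n_def by (simp add: mult.commute)
      qed
    qed
    finally show ?thesis .
  qed
  have injb: "inj_on (\<lambda>k. k*N) {..<N}" using N0 by (auto simp: inj_on_def)
  have sumB: "sum (d 1) (rr_bundle N ps 1) = - real p - real N"
  proof -
    have "sum (d 1) (rr_bundle N ps 1) = (\<Sum>k<N. d 1 (k*N))"
      unfolding bund by (simp add: sum.reindex[OF injb])
    also have "\<dots> = (\<Sum>k<p. d 1 (k*N)) + d 1 (p*N)" unfolding Np by simp
    also have "(\<Sum>k<p. d 1 (k*N)) = (\<Sum>k<p. -1)"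
      unfolding d_def n_def using N0 by (intro sum.cong) (auto simp: mult.commute)
    also have "d 1 (p*N) = - real N" unfolding d_def n_def by (simp add: mult.commute)
    finally show ?thesis by simp
  qed
  have "sum (d 1) (rr_bundle N ps 1) = (2 - 1 / real N) * MmS (d 1) N M"
  proof -
    have "- real p - real N = (2 - 1 / real N) * (- real N)" using Np by (simp add: field_simps)
    then show ?thesis using sumB mu by simp
  qed
  then show ?thesis using fin ne np rr mu N1 N0
    by (intro exI[of _ M] exI[of _ d] exI[of _ ps] exI[of _ 1]) auto
qed


theorem theorem1:
  shows "(\<forall>(N::nat) (M::'a set) (d::nat \<Rightarrow> 'a \<Rightarrow> real) ps.
            N \<ge> 1 \<and> finite M \<and> M \<noteq> {} \<and> (\<forall>i\<in>{1..N}. \<forall>j\<in>M. d i j \<le> 0) \<and>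
            rr_execution N d M ps \<longrightarrow>
            (\<forall>i\<in>{1..N}. sum (d i) (rr_bundle N ps i) \<ge> (2 - 1 / real N) * MmS (d i) N M))
       \<and> (\<forall>N::nat. N \<ge> 1 \<longrightarrow>
            (\<exists>(M::nat set) (d::nat \<Rightarrow> nat \<Rightarrow> real) ps i.
               finite M \<and> M \<noteq> {} \<and> (\<forall>i\<in>{1..N}. \<forall>j\<in>M. d i j \<le> 0) \<and>
               rr_execution N d M ps \<and> i \<in> {1..N} \<and> MmS (d i) N M < 0 \<and>
               sum (d i) (rr_bundle N ps i) = (2 - 1 / real N) * MmS (d i) N M))"
  proof (intro conjI allI impI ballI)
  fix N :: nat and M :: "'a set" and d :: "nat \<Rightarrow> 'a \<Rightarrow> real" and ps i
  assume h: "N \<ge> 1 \<and> finite M \<and> M \<noteq> {} \<and> (\<forall>i\<in>{1..N}. \<forall>j\<in>M. d i j \<le> 0) \<and> rr_execution N d M ps"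
    and i: "i \<in> {1..N}"
  show "sum (d i) (rr_bundle N ps i) \<ge> (2 - 1 / real N) * MmS (d i) N M"
    using rr_bound[of N M d ps i] h i by blast
next
  fix N :: nat assume "N \<ge> 1"
  then show "\<exists>(M::nat set) (d::nat \<Rightarrow> nat \<Rightarrow> real) ps i.
               finite M \<and> M \<noteq> {} \<and> (\<forall>i\<in>{1..N}. \<forall>j\<in>M. d i j \<le> 0) \<and>
               rr_execution N d M ps \<and> i \<in> {1..N} \<and> MmS (d i) N M < 0 \<and>
               sum (d i) (rr_bundle N ps i) = (2 - 1 / real N) * MmS (d i) N M"
    by (rule example)
qed

end
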